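(* Let $G$ be a finite connected graph and $\alpha\ge 1$ an integer. If $H$ is the disjoint union of $\alpha$ copies of $G$, then $D(H)=\min\{k : D(G,k)\ge \alpha\}$.
   Context: A $k$-labeling of a graph $G$ is a map $\phi:V(G)\to\{1,\dots,k\}$; an automorphism $\pi$ preserves $\phi$ if $\phi(\pi(v))=\phi(v)$ for all $v$; $\phi$ is distinguishing if only the identity automorphism preserves it. Two distinguishing $k$-labelings $\phi,\phi'$ are equivalent if some automorphism $\pi$ satisfies $\phi'(\pi(v))=\phi(v)$ for all $v$; $D(G,k)$ is the number of equivalence classes of distinguishing $k$-labelings of $G$. $D(H)$ is the smallest $k$ such that $H$ has a distinguishing $k$-labeling. *)

theory Defs
  imports "HOL-Library.FuncSet"
begin

text \<open>A finite simple graph is given by a vertex set V and an adjacency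
relation E (only its restriction to V matters).\<close>

definition simple_graph :: "'a set \<Rightarrow> ('a \<Rightarrow> 'a \<Rightarrow> bool) \<Rightarrow> bool" where
  "simple_graph V E \<longleftrightarrow> finite V \<and> (\<forall>u\<in>V. \<forall>v\<in>V. E u v \<longrightarrow> E v u) \<and> (\<forall>v\<in>V. \<not> E v v)"

definition connected_graph :: "'a set \<Rightarrow> ('a \<Rightarrow> 'a \<Rightarrow> bool) \<Rightarrow> bool" where
  "connected_graph V E \<longleftrightarrow> V \<noteq> {} \<and>
     (\<forall>u\<in>V. \<forall>v\<in>V. (u, v) \<in> {(x, y). x \<in> V \<and> y \<in> V \<and> E x y}\<^sup>*)"

definition auts :: "'a set \<Rightarrow> ('a \<Rightarrow> 'a \<Rightarrow> bool) \<Rightarrow> ('a \<Rightarrow> 'a) set" where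
  "auts V E = {\<pi>. bij_betw \<pi> V V \<and> (\<forall>x. x \<notin> V \<longrightarrow> \<pi> x = x) \<and>
                  (\<forall>u\<in>V. \<forall>v\<in>V. E u v \<longleftrightarrow> E (\<pi> u) (\<pi> v))}"

definition labelings :: "'a set \<Rightarrow> nat \<Rightarrow> ('a \<Rightarrow> nat) set" where
  "labelings V k = V \<rightarrow>\<^sub>E {1..k}"

definition preserves :: "'a set \<Rightarrow> ('a \<Rightarrow> 'a) \<Rightarrow> ('a \<Rightarrow> nat) \<Rightarrow> bool" where
  "preserves V \<pi> \<phi> \<longleftrightarrow> (\<forall>v\<in>V. \<phi> (\<pi> v) = \<phi> v)"

definition distinguishing :: "'a set \<Rightarrow> ('a \<Rightarrow> 'a \<Rightarrow> bool) \<Rightarrow> nat \<Rightarrow> ('a \<Rightarrow> nat) \<Rightarrow> bool" where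
  "distinguishing V E k \<phi> \<longleftrightarrow> \<phi> \<in> labelings V k \<and>
     (\<forall>\<pi>\<in>auts V E. preserves V \<pi> \<phi> \<longrightarrow> \<pi> = id)"

definition dist_labelings :: "'a set \<Rightarrow> ('a \<Rightarrow> 'a \<Rightarrow> bool) \<Rightarrow> nat \<Rightarrow> ('a \<Rightarrow> nat) set" where
  "dist_labelings V E k = {\<phi>. distinguishing V E k \<phi>}"

definition lab_equiv :: "'a set \<Rightarrow> ('a \<Rightarrow> 'a \<Rightarrow> bool) \<Rightarrow> nat \<Rightarrow> (('a \<Rightarrow> nat) \<times> ('a \<Rightarrow> nat)) set" where
  "lab_equiv V E k = {(\<phi>, \<phi>'). \<phi> \<in> dist_labelings V E k \<and> \<phi>' \<in> dist_labelings V E k \<and>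
      (\<exists>\<pi>\<in>auts V E. \<forall>v\<in>V. \<phi>' (\<pi> v) = \<phi> v)}"

definition D_count :: "'a set \<Rightarrow> ('a \<Rightarrow> 'a \<Rightarrow> bool) \<Rightarrow> nat \<Rightarrow> nat" where
  "D_count V E k = card (dist_labelings V E k // lab_equiv V E k)"

definition dist_number :: "'a set \<Rightarrow> ('a \<Rightarrow> 'a \<Rightarrow> bool) \<Rightarrow> nat" where
  "dist_number V E = (LEAST k. \<exists>\<phi>. distinguishing V E k \<phi>)"

definition copies_V :: "'a set \<Rightarrow> nat \<Rightarrow> ('a \<times> nat) set" where
  "copies_V V \<alpha> = V \<times> {0..<\<alpha>}"

definition copies_E :: "('a \<Rightarrow> 'a \<Rightarrow> bool) \<Rightarrow> ('a \<times> nat) \<Rightarrow> ('a \<times> nat) \<Rightarrow> bool" where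
  "copies_E E x y \<longleftrightarrow> snd x = snd y \<and> E (fst x) (fst y)"

end

theory Submission
  imports Defs
begin

lemma auts_id: "id \<in> auts V E"
  by (simp add: auts_def bij_betw_id)

lemma auts_in: "\<sigma> \<in> auts V E \<Longrightarrow> v \<in> V \<Longrightarrow> \<sigma> v \<in> V"
  unfolding auts_def using bij_betwE by blast

lemma auts_edge: "\<sigma> \<in> auts V E \<Longrightarrow> u \<in> V \<Longrightarrow> v \<in> V \<Longrightarrow> E u v \<longleftrightarrow> E (\<sigma> u) (\<sigma> v)"
  unfolding auts_def by blast

lemma auts_comp:
  assumes "\<sigma> \<in> auts V E" "\<rho> \<in> auts V E"
  shows "\<rho> \<circ> \<sigma> \<in> auts V E"
proof -
  have "bij_betw (\<rho> \<circ> \<sigma>) V V" using assms unfolding auts_def using bij_betw_trans by blast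
  moreover have "\<forall>x. x \<notin> V \<longrightarrow> (\<rho> \<circ> \<sigma>) x = x" using assms unfolding auts_def by simp
  moreover have "\<forall>u\<in>V. \<forall>v\<in>V. E u v \<longleftrightarrow> E ((\<rho> \<circ> \<sigma>) u) ((\<rho> \<circ> \<sigma>) v)"
    using assms auts_in auts_edge by (metis comp_apply)
  ultimately show ?thesis unfolding auts_def by blast
qed

lemma auts_inv:
  assumes "\<sigma> \<in> auts V E"
  shows "\<exists>\<tau>\<in>auts V E. \<forall>v\<in>V. \<sigma> (\<tau> v) = v \<and> \<tau> (\<sigma> v) = v"
proof -
  define \<tau> where "\<tau> x = (if x \<in> V then inv_into V \<sigma> x else x)" for x
  have b: "bij_betw \<sigma> V V" using assms unfolding auts_def by blast
  have b2: "bij_betw (inv_into V \<sigma>) V V" using bij_betw_inv_into[OF b] .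
  have bt: "bij_betw \<tau> V V" using b2 by (rule bij_betw_cong[THEN iffD1, rotated]) (simp add: \<tau>_def)
  have inv1: "\<sigma> (\<tau> v) = v" if "v \<in> V" for v
    using that b by (simp add: \<tau>_def bij_betw_imp_surj_on f_inv_into_f)
  have inv2: "\<tau> (\<sigma> v) = v" if "v \<in> V" for v
    using that b auts_in[OF assms] by (simp add: \<tau>_def bij_betw_inv_into_left)
  have tin: "\<tau> v \<in> V" if "v \<in> V" for v using bt that bij_betwE by blast
  have "\<forall>u\<in>V. \<forall>v\<in>V. E u v \<longleftrightarrow> E (\<tau> u) (\<tau> v)"
    using auts_edge[OF assms] tin inv1 by metis
  then have "\<tau> \<in> auts V E" using bt unfolding auts_def by (simp add: \<tau>_def)
  then show ?thesis using inv1 inv2 by blast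
qed

lemma lab_equiv_equiv: "equiv (dist_labelings V E k) (lab_equiv V E k)"
proof -
  have r: "lab_equiv V E k \<subseteq> dist_labelings V E k \<times> dist_labelings V E k"
    unfolding lab_equiv_def by auto
  have rf: "refl_on (dist_labelings V E k) (lab_equiv V E k)"
    unfolding refl_on_def lab_equiv_def using auts_id[of V E] by (auto intro!: bexI[of _ id])
  have sy: "sym (lab_equiv V E k)"
  proof (rule symI)
    fix a b assume "(a, b) \<in> lab_equiv V E k"
    then obtain \<pi> where p: "\<pi> \<in> auts V E" "\<forall>v\<in>V. b (\<pi> v) = a v"
      and d: "a \<in> dist_labelings V E k" "b \<in> dist_labelings V E k"
      unfolding lab_equiv_def by blast
    obtain \<tau> where t: "\<tau> \<in> auts V E" "\<forall>v\<in>V. \<pi> (\<tau> v) = v \<and> \<tau> (\<pi> v) = v"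
      using auts_inv[OF p(1)] by blast
    have "\<forall>v\<in>V. a (\<tau> v) = b v" using p t auts_in by metis
    then show "(b, a) \<in> lab_equiv V E k" unfolding lab_equiv_def using d t(1) by blast
  qed
  have tr: "trans (lab_equiv V E k)"
  proof (rule transI)
    fix a b c assume "(a, b) \<in> lab_equiv V E k" "(b, c) \<in> lab_equiv V E k"
    then obtain \<pi> \<rho> where p: "\<pi> \<in> auts V E" "\<forall>v\<in>V. b (\<pi> v) = a v"
      and q: "\<rho> \<in> auts V E" "\<forall>v\<in>V. c (\<rho> v) = b v"
      and d: "a \<in> dist_labelings V E k" "c \<in> dist_labelings V E k"
      unfolding lab_equiv_def by blast
    have "\<forall>v\<in>V. c ((\<rho> \<circ> \<pi>) v) = a v" using p q auts_in[OF p(1)] by simp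
    then show "(a, c) \<in> lab_equiv V E k" unfolding lab_equiv_def using d auts_comp[OF p(1) q(1)] by blast
  qed
  show ?thesis using r rf sy tr unfolding equiv_def by blast
qed


lemma copy_aut:
  assumes fin: "finite V" and conn: "connected_graph V E"
    and p: "\<pi> \<in> auts (copies_V V \<alpha>) (copies_E E)" and i: "i < \<alpha>"
  shows "\<exists>j<\<alpha>. \<exists>\<sigma>\<in>auts V E. \<forall>v\<in>V. \<pi> (v, i) = (\<sigma> v, j)"
proof -
  let ?W = "copies_V V \<alpha>"
  obtain v0 where v0: "v0 \<in> V" using conn unfolding connected_graph_def by blast
  define j where "j = snd (\<pi> (v0, i))"
  have pin: "\<pi> x \<in> ?W" if "x \<in> ?W" for x using auts_in[OF p that] .
  have inW: "(v, i) \<in> ?W" if "v \<in> V" for v using that i by (simp add: copies_V_def)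
  have pe: "copies_E E x y \<longleftrightarrow> copies_E E (\<pi> x) (\<pi> y)" if "x \<in> ?W" "y \<in> ?W" for x y
    using auts_edge[OF p that] .
  have const: "snd (\<pi> (v, i)) = j" if "v \<in> V" for v
  proof -
    have "(v0, v) \<in> {(x, y). x \<in> V \<and> y \<in> V \<and> E x y}\<^sup>*"
      using conn v0 that unfolding connected_graph_def by blast
    then show ?thesis
    proof (induction rule: rtrancl_induct)
      case base then show ?case by (simp add: j_def)
    next
      case (step y z)
      then have yz: "y \<in> V" "z \<in> V" "E y z" by auto
      then have "copies_E E (y, i) (z, i)" by (simp add: copies_E_def)
      then have "copies_E E (\<pi> (y, i)) (\<pi> (z, i))" using pe inW yz by blast
      then show ?case using step.IH by (simp add: copies_E_def)
    qed
  qed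
  have jlt: "j < \<alpha>" using pin[OF inW[OF v0]] by (auto simp: j_def copies_V_def)
  define \<sigma> where "\<sigma> v = (if v \<in> V then fst (\<pi> (v, i)) else v)" for v
  have sv: "\<pi> (v, i) = (\<sigma> v, j)" if "v \<in> V" for v
    using const[OF that] that by (simp add: \<sigma>_def prod_eq_iff)
  have sin: "\<sigma> v \<in> V" if "v \<in> V" for v
    using pin[OF inW[OF that]] that by (auto simp: \<sigma>_def copies_V_def mem_Times_iff)
  have injp: "inj_on \<pi> ?W" using p unfolding auts_def bij_betw_def by blast
  have inj: "inj_on \<sigma> V"
  proof (rule inj_onI)
    fix u v assume uv: "u \<in> V" "v \<in> V" "\<sigma> u = \<sigma> v"
    then have "\<pi> (u, i) = \<pi> (v, i)" using sv by simp
    then have "(u, i) = (v, i)" using injp inW uv by (meson inj_onD)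
    then show "u = v" by simp
  qed
  have "\<sigma> ` V = V" using endo_inj_surj[OF fin _ inj] sin by blast
  then have bj: "bij_betw \<sigma> V V" using inj by (simp add: bij_betw_def)
  have ed: "\<forall>u\<in>V. \<forall>v\<in>V. E u v \<longleftrightarrow> E (\<sigma> u) (\<sigma> v)"
  proof (intro ballI)
    fix u v assume uv: "u \<in> V" "v \<in> V"
    have "E u v \<longleftrightarrow> copies_E E (u, i) (v, i)" by (simp add: copies_E_def)
    also have "\<dots> \<longleftrightarrow> copies_E E (\<pi> (u, i)) (\<pi> (v, i))" using pe inW uv by blast
    also have "\<dots> \<longleftrightarrow> E (\<sigma> u) (\<sigma> v)" using sv uv by (simp add: copies_E_def)
    finally show "E u v \<longleftrightarrow> E (\<sigma> u) (\<sigma> v)" .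
  qed
  have "\<sigma> \<in> auts V E" using bj ed unfolding auts_def by (simp add: \<sigma>_def)
  then show ?thesis using jlt sv by blast
qed

lemma lift_aut:
  assumes s: "\<sigma> \<in> auts V E" and i: "i < \<alpha>"
  shows "(\<lambda>x. if fst x \<in> V \<and> snd x = i then (\<sigma> (fst x), i) else x) \<in> auts (copies_V V \<alpha>) (copies_E E)"
    (is "?\<pi> \<in> _")
proof -
  obtain \<tau> where t: "\<tau> \<in> auts V E" "\<forall>v\<in>V. \<sigma> (\<tau> v) = v \<and> \<tau> (\<sigma> v) = v"
    using auts_inv[OF s] by blast
  define \<pi>' where "\<pi>' x = (if fst x \<in> V \<and> snd x = i then (\<tau> (fst x), i) else x)" for x
  have "bij_betw ?\<pi> (copies_V V \<alpha>) (copies_V V \<alpha>)"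
  proof (rule bij_betw_byWitness[where f'=\<pi>'])
    show "\<forall>a\<in>copies_V V \<alpha>. \<pi>' (?\<pi> a) = a"
      using t auts_in[OF s] by (auto simp: \<pi>'_def copies_V_def)
    show "\<forall>a\<in>copies_V V \<alpha>. ?\<pi> (\<pi>' a) = a"
      using t auts_in[OF t(1)] by (auto simp: \<pi>'_def copies_V_def)
    show "?\<pi> ` copies_V V \<alpha> \<subseteq> copies_V V \<alpha>"
      using auts_in[OF s] i by (auto simp: copies_V_def)
    show "\<pi>' ` copies_V V \<alpha> \<subseteq> copies_V V \<alpha>"
      using auts_in[OF t(1)] i by (auto simp: \<pi>'_def copies_V_def)
  qed
  moreover have "\<forall>x. x \<notin> copies_V V \<alpha> \<longrightarrow> ?\<pi> x = x"
    using i by (auto simp: copies_V_def)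
  moreover have "\<forall>u\<in>copies_V V \<alpha>. \<forall>v\<in>copies_V V \<alpha>. copies_E E u v \<longleftrightarrow> copies_E E (?\<pi> u) (?\<pi> v)"
    using auts_edge[OF s] auts_in[OF s] by (auto simp: copies_V_def copies_E_def)
  ultimately show ?thesis unfolding auts_def by blast
qed

lemma swap_aut:
  assumes s: "\<sigma> \<in> auts V E" and t: "\<tau> \<in> auts V E" "\<forall>v\<in>V. \<sigma> (\<tau> v) = v \<and> \<tau> (\<sigma> v) = v"
    and i: "i < \<alpha>" and j: "j < \<alpha>" and ij: "i \<noteq> j"
  shows "(\<lambda>x. if fst x \<in> V \<and> snd x = i then (\<sigma> (fst x), j)
              else if fst x \<in> V \<and> snd x = j then (\<tau> (fst x), i) else x) \<in> auts (copies_V V \<alpha>) (copies_E E)"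
    (is "?\<pi> \<in> _")
proof -
  have "bij_betw ?\<pi> (copies_V V \<alpha>) (copies_V V \<alpha>)"
  proof (rule bij_betw_byWitness[where f'="?\<pi>"])
    show "\<forall>a\<in>copies_V V \<alpha>. ?\<pi> (?\<pi> a) = a"
      using t auts_in[OF s] auts_in[OF t(1)] ij by (auto simp: copies_V_def)
    then show "\<forall>a\<in>copies_V V \<alpha>. ?\<pi> (?\<pi> a) = a" .
    show "?\<pi> ` copies_V V \<alpha> \<subseteq> copies_V V \<alpha>"
      using auts_in[OF s] auts_in[OF t(1)] i j by (auto simp: copies_V_def)
    then show "?\<pi> ` copies_V V \<alpha> \<subseteq> copies_V V \<alpha>" .
  qed
  moreover have "\<forall>x. x \<notin> copies_V V \<alpha> \<longrightarrow> ?\<pi> x = x"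
    using i j by (auto simp: copies_V_def)
  moreover have "\<forall>u\<in>copies_V V \<alpha>. \<forall>v\<in>copies_V V \<alpha>. copies_E E u v \<longleftrightarrow> copies_E E (?\<pi> u) (?\<pi> v)"
    using auts_edge[OF s] auts_in[OF s] auts_edge[OF t(1)] auts_in[OF t(1)] ij
    by (auto simp: copies_V_def copies_E_def)
  ultimately show ?thesis unfolding auts_def by blast
qed


lemma finite_dist: "finite V \<Longrightarrow> finite (dist_labelings V E k)"
proof -
  assume "finite V"
  then have "finite (labelings V k)" unfolding labelings_def by (simp add: finite_PiE)
  moreover have "dist_labelings V E k \<subseteq> labelings V k"
    unfolding dist_labelings_def distinguishing_def by blast
  ultimately show ?thesis by (rule finite_subset[rotated])
qed

lemma fwd:
  assumes fin: "finite V" and ne: "V \<noteq> {}"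
    and d: "distinguishing (copies_V V \<alpha>) (copies_E E) k \<phi>"
  shows "\<alpha> \<le> D_count V E k"
proof -
  let ?W = "copies_V V \<alpha>"
  let ?R = "lab_equiv V E k"
  define \<psi> where "\<psi> i = (\<lambda>v. if v \<in> V then \<phi> (v, i) else undefined)" for i
  have phl: "\<phi> \<in> ?W \<rightarrow>\<^sub>E {1..k}" using d unfolding distinguishing_def labelings_def by blast
  have phd: "\<pi> = id" if "\<pi> \<in> auts ?W (copies_E E)" "\<forall>x\<in>?W. \<phi> (\<pi> x) = \<phi> x" for \<pi>
    using d that unfolding distinguishing_def preserves_def by blast
  have psil: "\<psi> i \<in> labelings V k" if "i < \<alpha>" for i
    using phl that unfolding labelings_def \<psi>_def by (auto simp: copies_V_def PiE_iff extensional_def)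
  have psid: "\<psi> i \<in> dist_labelings V E k" if i: "i < \<alpha>" for i
  proof -
    have "\<sigma> = id" if s: "\<sigma> \<in> auts V E" and pr: "preserves V \<sigma> (\<psi> i)" for \<sigma>
    proof -
      let ?\<pi> = "\<lambda>x. if fst x \<in> V \<and> snd x = i then (\<sigma> (fst x), i) else x"
      have pa: "?\<pi> \<in> auts ?W (copies_E E)" by (rule lift_aut[OF s i])
      have "\<forall>x\<in>?W. \<phi> (?\<pi> x) = \<phi> x"
        using pr auts_in[OF s] unfolding preserves_def \<psi>_def by (auto simp: copies_V_def)
      then have pid: "?\<pi> = id" using phd pa by blast
      show "\<sigma> = id"
      proof
        fix v show "\<sigma> v = id v"
        proof (cases "v \<in> V")
          case True
          have "?\<pi> (v, i) = (v, i)" using fun_cong[OF pid, of "(v, i)"] by (simp only: id_apply)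
          then show ?thesis using True by simp
        next
          case False then show ?thesis using s unfolding auts_def by simp
        qed
      qed
    qed
    then show ?thesis using psil[OF i] unfolding dist_labelings_def distinguishing_def by blast
  qed
  have noneq: "(\<psi> i, \<psi> j) \<notin> ?R" if ij: "i < \<alpha>" "j < \<alpha>" "i \<noteq> j" for i j
  proof
    assume "(\<psi> i, \<psi> j) \<in> ?R"
    then obtain \<sigma> where s: "\<sigma> \<in> auts V E" "\<forall>v\<in>V. \<psi> j (\<sigma> v) = \<psi> i v"
      unfolding lab_equiv_def by blast
    obtain \<tau> where t: "\<tau> \<in> auts V E" "\<forall>v\<in>V. \<sigma> (\<tau> v) = v \<and> \<tau> (\<sigma> v) = v"
      using auts_inv[OF s(1)] by blast
    let ?\<pi> = "\<lambda>x. if fst x \<in> V \<and> snd x = i then (\<sigma> (fst x), j)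
              else if fst x \<in> V \<and> snd x = j then (\<tau> (fst x), i) else x"
    have pa: "?\<pi> \<in> auts ?W (copies_E E)" by (rule swap_aut[OF s(1) t ij])
    have "\<forall>x\<in>?W. \<phi> (?\<pi> x) = \<phi> x"
    proof
      fix x assume x: "x \<in> ?W"
      obtain v l where xv: "x = (v, l)" "v \<in> V" using x by (auto simp: copies_V_def)
      show "\<phi> (?\<pi> x) = \<phi> x"
      proof (cases "l = i")
        case True
        then show ?thesis using s(2) xv auts_in[OF s(1)] by (simp add: \<psi>_def)
      next
        case False
        show ?thesis
        proof (cases "l = j")
          case True
          have "\<psi> j (\<sigma> (\<tau> v)) = \<psi> i (\<tau> v)" using s(2) auts_in[OF t(1)] xv by blast
          then show ?thesis using False True t xv auts_in[OF t(1)] by (simp add: \<psi>_def)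
        next
          case False2: False
          then show ?thesis using False xv by simp
        qed
      qed
    qed
    then have pid: "?\<pi> = id" using phd pa by blast
    obtain v where v: "v \<in> V" using ne by blast
    have "?\<pi> (v, i) = (v, i)" using fun_cong[OF pid, of "(v, i)"] by (simp only: id_apply)
    then show False using v ij by simp
  qed
  define C where "C i = ?R `` {\<psi> i}" for i
  have eqv: "equiv (dist_labelings V E k) ?R" by (rule lab_equiv_equiv)
  have Cin: "C i \<in> dist_labelings V E k // ?R" if "i < \<alpha>" for i
    unfolding C_def using psid[OF that] by (rule quotientI)
  have "inj_on C {0..<\<alpha>}"
  proof (rule inj_onI)
    fix i j assume ij: "i \<in> {0..<\<alpha>}" "j \<in> {0..<\<alpha>}" "C i = C j"
    have "(\<psi> j, \<psi> j) \<in> ?R" using eqv psid[of j] ij unfolding equiv_def refl_on_def by auto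
    then have "\<psi> j \<in> C j" unfolding C_def by simp
    then have "\<psi> j \<in> C i" using ij(3) by simp
    then have "(\<psi> i, \<psi> j) \<in> ?R" unfolding C_def by blast
    then show "i = j" using noneq ij by auto
  qed
  then have "card (C ` {0..<\<alpha>}) = \<alpha>" by (simp add: card_image)
  moreover have "C ` {0..<\<alpha>} \<subseteq> dist_labelings V E k // ?R" using Cin by auto
  moreover have "finite (dist_labelings V E k // ?R)"
    using finite_dist[OF fin] by (simp add: finite_quotient[OF _ equiv_type[OF eqv]])
  ultimately show ?thesis unfolding D_count_def by (metis card_mono)
qed


lemma bwd:
  assumes fin: "finite V" and conn: "connected_graph V E"
    and c: "\<alpha> \<le> D_count V E k"
  shows "\<exists>\<phi>. distinguishing (copies_V V \<alpha>) (copies_E E) k \<phi>"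
proof -
  let ?W = "copies_V V \<alpha>"
  let ?R = "lab_equiv V E k"
  let ?Q = "dist_labelings V E k // ?R"
  have eqv: "equiv (dist_labelings V E k) ?R" by (rule lab_equiv_equiv)
  obtain S where S: "S \<subseteq> ?Q" "card S = \<alpha>" "finite S"
    using obtain_subset_with_card_n[of \<alpha> ?Q] c unfolding D_count_def by blast
  obtain h where h: "bij_betw h {0..<\<alpha>} S" using ex_bij_betw_nat_finite[OF S(3)] S(2) by auto
  have hQ: "h i \<in> ?Q" if "i < \<alpha>" for i using h S(1) that bij_betwE by fastforce
  define \<psi> where "\<psi> i = (SOME \<psi>. \<psi> \<in> h i)" for i
  have psih: "\<psi> i \<in> h i" if "i < \<alpha>" for i
    using in_quotient_imp_non_empty[OF eqv hQ[OF that]] unfolding \<psi>_def by (simp add: some_in_eq)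
  have psid: "\<psi> i \<in> dist_labelings V E k" if "i < \<alpha>" for i
    using psih[OF that] hQ[OF that] in_quotient_imp_subset[OF eqv] by blast
  have noneq: "i = j" if ij: "i < \<alpha>" "j < \<alpha>" "(\<psi> i, \<psi> j) \<in> ?R" for i j
  proof -
    have "h i = h j" using quotient_eq_iff[OF eqv hQ[OF ij(1)] hQ[OF ij(2)] psih[OF ij(1)] psih[OF ij(2)]] ij(3) by simp
    then show ?thesis using h ij unfolding bij_betw_def inj_on_def by simp
  qed
  have psil: "\<psi> i \<in> V \<rightarrow>\<^sub>E {1..k}" if "i < \<alpha>" for i
    using psid[OF that] unfolding dist_labelings_def distinguishing_def labelings_def by blast
  have psidist: "\<sigma> = id" if "i < \<alpha>" "\<sigma> \<in> auts V E" "preserves V \<sigma> (\<psi> i)" for i \<sigma>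
    using psid[OF that(1)] that unfolding dist_labelings_def distinguishing_def by blast
  define \<phi> where "\<phi> x = (if x \<in> ?W then \<psi> (snd x) (fst x) else undefined)" for x
  have phl: "\<phi> \<in> labelings ?W k"
    using psil unfolding labelings_def \<phi>_def by (auto simp: copies_V_def PiE_iff extensional_def)
  have "\<pi> = id" if p: "\<pi> \<in> auts ?W (copies_E E)" and pr: "preserves ?W \<pi> \<phi>" for \<pi>
  proof
    fix x show "\<pi> x = id x"
    proof (cases "x \<in> ?W")
      case False then show ?thesis using p unfolding auts_def by (cases x) auto
    next
      case True
      then obtain v i where x: "x = (v, i)" "v \<in> V" "i < \<alpha>" by (auto simp: copies_V_def)
      obtain j \<sigma> where js: "j < \<alpha>" "\<sigma> \<in> auts V E" "\<forall>u\<in>V. \<pi> (u, i) = (\<sigma> u, j)"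
        using copy_aut[OF fin conn p x(3)] by blast
      have eq: "\<psi> j (\<sigma> u) = \<psi> i u" if "u \<in> V" for u
      proof -
        have inW: "(u, i) \<in> ?W" using that x by (simp add: copies_V_def)
        have "\<phi> (\<pi> (u, i)) = \<phi> (u, i)" using pr inW unfolding preserves_def by blast
        moreover have "(\<sigma> u, j) \<in> ?W" using auts_in[OF js(2) that] js(1) by (simp add: copies_V_def)
        ultimately show ?thesis using js(3) that inW unfolding \<phi>_def by simp
      qed
      have "(\<psi> i, \<psi> j) \<in> ?R" unfolding lab_equiv_def using psid x(3) js eq by blast
      then have ij: "i = j" using noneq x(3) js(1) by blast
      have "preserves V \<sigma> (\<psi> i)" using eq ij unfolding preserves_def by simp
      then have "\<sigma> = id" using psidist x(3) js(2) by blast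
      then show ?thesis using js(3) x ij by simp
    qed
  qed
  then show ?thesis using phl unfolding distinguishing_def by blast
qed

theorem lemma3:
  fixes V :: "'a set" and E :: "'a \<Rightarrow> 'a \<Rightarrow> bool" and \<alpha> :: nat
  assumes "simple_graph V E" and "connected_graph V E" and "\<alpha> \<ge> 1"
  shows "dist_number (copies_V V \<alpha>) (copies_E E) = (LEAST k. D_count V E k \<ge> \<alpha>)"
proof -
  have fin: "finite V" using assms(1) unfolding simple_graph_def by blast
  have ne: "V \<noteq> {}" using assms(2) unfolding connected_graph_def by blast
  have "(\<exists>\<phi>. distinguishing (copies_V V \<alpha>) (copies_E E) k \<phi>) \<longleftrightarrow> D_count V E k \<ge> \<alpha>" for k
    using fwd[OF fin ne] bwd[OF fin assms(2)] by blast
  then show ?thesis unfolding dist_number_def by simp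
qed

end
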